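(* In the Setting, it cannot hold simultaneously that $r=\sqrt{K^2-\lambda_2V}$, $r+s=-\sqrt{K^2-\lambda_2V}$, $s=-\sqrt{K-\lambda_1}$, $f_1=0$, $g_1=f-c+1$, $g_2=c-1$ and $f_2=g-c$.
   Context: Setting: $\Gamma$ is a primitive strongly regular graph with parameters $(v,k,\lambda,\mu)$ (a $k$-regular graph on $v$ vertices, any two adjacent vertices having $\lambda$ and any two distinct non-adjacent vertices having $\mu$ common neighbours; primitive means $\Gamma$ and its complement are connected), with spectrum $k^1, r^f, s^g$ where $k>r>s$ and exponents are multiplicities. $C$ is a coclique in $\Gamma$ of size $c=\frac{vs}{s-k}$. A $K$-regular graph on $V$ vertices, neither complete nor edgeless, is a divisible design graph with parameters $(V,K,\lambda_1,\lambda_2;m,n)$ if its vertex set can be partitioned into $m$ canonical classes of size $n$ such that two distinct vertices in the same class have exactly $\lambda_1$ common neighbours and two vertices in different classes have exactly $\lambda_2$ common neighbours; it is proper unless $m=1$, $n=1$ or $\lambda_1=\lambda_2$. It is assumed that the subgraph $\Delta$ induced on $V(\Gamma)\setminus C$ is a proper divisible design graph with parameters $(V,K,\lambda_1,\lambda_2;m,n)$. Let $A$ be the adjacency matrix of $\Delta$, $W$ the space of vectors constant on each canonical class and $\mathbf{1}$ the all-ones vector. It is known that $A$ acts on $W^\perp$ with eigenvalues $\pm\sqrt{K-\lambda_1}$, whose multiplicities are denoted $f_1$ (for $+$) and $f_2$ (for $-$), with $f_1+f_2=m(n-1)$, and on $W\cap\mathbf{1}^\perp$ with eigenvalues $\pm\sqrt{K^2-\lambda_2V}$,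 with multiplicities $g_1$ (for $+$) and $g_2$ (for $-$), $g_1+g_2=m-1$. It is also known that the spectrum of $\Delta$ is $(k+s)^1, r^{f-c+1}, (r+s)^{c-1}, s^{g-c}$, with $c<g$. *)

theory Defs
  imports "HOL-Analysis.Analysis" "HOL-Library.Disjoint_Sets"
begin

text \<open>Graphs: vertex set = a finite type 'a; adjacency = symmetric irreflexive relation E.
  Vectors: real^'a.  A subgraph induced on S acts on the vectors supported on S.\<close>

definition simple_graph :: "('a \<Rightarrow> 'a \<Rightarrow> bool) \<Rightarrow> bool" where
  "simple_graph E \<longleftrightarrow> (\<forall>x y. E x y \<longleftrightarrow> E y x) \<and> (\<forall>x. \<not> E x x)"

definition connected_graph :: "('a \<Rightarrow> 'a \<Rightarrow> bool) \<Rightarrow> bool" where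
  "connected_graph E \<longleftrightarrow> (\<forall>x y. E\<^sup>*\<^sup>* x y)"

definition complement_graph :: "('a \<Rightarrow> 'a \<Rightarrow> bool) \<Rightarrow> 'a \<Rightarrow> 'a \<Rightarrow> bool" where
  "complement_graph E x y \<longleftrightarrow> x \<noteq> y \<and> \<not> E x y"

definition srg :: "('a::finite \<Rightarrow> 'a \<Rightarrow> bool) \<Rightarrow> nat \<Rightarrow> nat \<Rightarrow> nat \<Rightarrow> nat \<Rightarrow> bool" where
  "srg E v k la mu \<longleftrightarrow> simple_graph E \<and> v = CARD('a) \<and>
     (\<forall>x. card {y. E x y} = k) \<and>
     (\<forall>x y. x \<noteq> y \<and> E x y \<longrightarrow> card {z. E x z \<and> E y z} = la) \<and>
     (\<forall>x y. x \<noteq> y \<and> \<not> E x y \<longrightarrow> card {z. E x z \<and> E y z} = mu)"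

definition primitive_srg :: "('a::finite \<Rightarrow> 'a \<Rightarrow> bool) \<Rightarrow> nat \<Rightarrow> nat \<Rightarrow> nat \<Rightarrow> nat \<Rightarrow> bool" where
  "primitive_srg E v k la mu \<longleftrightarrow> srg E v k la mu \<and> connected_graph E \<and>
     connected_graph (complement_graph E)"

definition coclique :: "('a \<Rightarrow> 'a \<Rightarrow> bool) \<Rightarrow> 'a set \<Rightarrow> bool" where
  "coclique E C \<longleftrightarrow> (\<forall>x\<in>C. \<forall>y\<in>C. \<not> E x y)"

definition ddg :: "('a \<Rightarrow> 'a \<Rightarrow> bool) \<Rightarrow> 'a set \<Rightarrow> 'a set set \<Rightarrow>
    nat \<Rightarrow> nat \<Rightarrow> nat \<Rightarrow> nat \<Rightarrow> nat \<Rightarrow> nat \<Rightarrow> bool" where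
  "ddg E D P V K l1 l2 m n \<longleftrightarrow> V = card D \<and>
     (\<forall>x\<in>D. card {y\<in>D. E x y} = K) \<and>
     (\<exists>x\<in>D. \<exists>y\<in>D. x \<noteq> y \<and> \<not> E x y) \<and>
     (\<exists>x\<in>D. \<exists>y\<in>D. E x y) \<and>
     partition_on D P \<and> card P = m \<and> (\<forall>X\<in>P. card X = n) \<and>
     (\<forall>X\<in>P. \<forall>x\<in>X. \<forall>y\<in>X. x \<noteq> y \<longrightarrow> card {z\<in>D. E x z \<and> E y z} = l1) \<and>
     (\<forall>X\<in>P. \<forall>Y\<in>P. X \<noteq> Y \<longrightarrow> (\<forall>x\<in>X. \<forall>y\<in>Y. card {z\<in>D. E x z \<and> E y z} = l2))"

definition proper_ddg :: "('a \<Rightarrow> 'a \<Rightarrow> bool) \<Rightarrow> 'a set \<Rightarrow> 'a set set \<Rightarrow>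
    nat \<Rightarrow> nat \<Rightarrow> nat \<Rightarrow> nat \<Rightarrow> nat \<Rightarrow> nat \<Rightarrow> bool" where
  "proper_ddg E D P V K l1 l2 m n \<longleftrightarrow> ddg E D P V K l1 l2 m n \<and>
     m \<noteq> 1 \<and> n \<noteq> 1 \<and> l1 \<noteq> l2"

definition supp_on :: "'a set \<Rightarrow> (real^'a::finite) set" where
  "supp_on S = {x. \<forall>i. i \<notin> S \<longrightarrow> x $ i = 0}"

definition adj_op :: "('a::finite \<Rightarrow> 'a \<Rightarrow> bool) \<Rightarrow> 'a set \<Rightarrow> real^'a \<Rightarrow> real^'a" where
  "adj_op E S x = (\<chi> i. if i \<in> S then (\<Sum>j\<in>S. if E i j then x $ j else 0) else 0)"

definition eigsp :: "('a::finite \<Rightarrow> 'a \<Rightarrow> bool) \<Rightarrow> 'a set \<Rightarrow> (real^'a) set \<Rightarrow> real \<Rightarrow> (real^'a) set" where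
  "eigsp E S U \<theta> = {x \<in> U \<inter> supp_on S. adj_op E S x = \<theta> *\<^sub>R x}"

definition eig_mult :: "('a::finite \<Rightarrow> 'a \<Rightarrow> bool) \<Rightarrow> 'a set \<Rightarrow> real \<Rightarrow> nat" where
  "eig_mult E S \<theta> = dim (eigsp E S UNIV \<theta>)"

definition class_const :: "'a set \<Rightarrow> 'a set set \<Rightarrow> (real^'a::finite) set" where
  "class_const D P = {x \<in> supp_on D. \<forall>X\<in>P. \<forall>i\<in>X. \<forall>j\<in>X. x $ i = x $ j}"

definition ones_on :: "'a set \<Rightarrow> real^'a::finite" where
  "ones_on D = (\<chi> i. if i \<in> D then 1 else 0)"

definition orth_in :: "'a set \<Rightarrow> (real^'a::finite) set \<Rightarrow> (real^'a) set" where
  "orth_in D U = {x \<in> supp_on D. \<forall>w\<in>U. x \<bullet> w = 0}"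

end

theory Submission
  imports Defs
begin

lemma subspace_supp_on: "subspace (supp_on D)"
  unfolding subspace_def supp_on_def by auto

lemma dim_supp_on: "dim (supp_on (D::'a::finite set)) = card D"
  using dim_substandard_cart[of D, where 'a=real] unfolding supp_on_def dim_vec_eq by simp

lemma adj_op_add: "adj_op E S (x + y) = adj_op E S x + adj_op E S y"
  unfolding adj_op_def by (auto simp: vec_eq_iff sum.distrib[symmetric] intro!: sum.cong)

lemma adj_op_scale: "adj_op E S (c *\<^sub>R x) = c *\<^sub>R adj_op E S x"
  unfolding adj_op_def by (auto simp: vec_eq_iff sum_distrib_left if_distrib cong: if_cong)

lemma adj_op_zero: "adj_op E S 0 = 0"
  using adj_op_scale[of E S 0 0] by simp

lemma subspace_eigsp: "subspace U \<Longrightarrow> subspace (eigsp E S U \<theta>)"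
  unfolding subspace_def eigsp_def
  by (auto simp: adj_op_add adj_op_scale adj_op_zero supp_on_def algebra_simps)

lemma subspace_orth_in: "subspace (orth_in D U)"
  unfolding subspace_def orth_in_def supp_on_def by (auto simp: inner_add_left)

lemma main_aux:
  fixes E :: "'a::finite \<Rightarrow> 'a \<Rightarrow> bool" and D :: "'a set" and P s
  assumes part: "partition_on D P" and cP: "card P = m" and cX: "\<forall>X\<in>P. card X = n"
    and n2: "n \<noteq> 1" and Dne: "D \<noteq> {}"
    and irr: "\<And>x. \<not> E x x"
    and fd: "dim (eigsp E D (orth_in D (class_const D P)) s) = m * (n - 1)"
  shows "s = 0 \<or> s = -1"
proof -
  define W where "W = class_const D P"
  define Wp where "Wp = orth_in D W"
  define ind :: "'a set \<Rightarrow> real^'a" where "ind X = (\<chi> i. if i \<in> X then 1 else 0)" for X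
  have finD: "finite D" by simp
  have XD: "X \<subseteq> D" if "X \<in> P" for X using part that unfolding partition_on_def by auto
  have Xne: "X \<noteq> {}" if "X \<in> P" for X using part that unfolding partition_on_def by auto
  have disj: "X \<inter> Y = {}" if "X \<in> P" "Y \<in> P" "X \<noteq> Y" for X Y
    using part that unfolding partition_on_def disjoint_def by auto
  have cardD: "card D = m * n"
  proof -
    have "card D = card (\<Union>P)" using part unfolding partition_on_def by simp
    also have "\<dots> = sum card P"
      by (rule card_Union_disjoint) (use part in \<open>auto simp: partition_on_def disjoint_def pairwise_def disjnt_def\<close>)
    also have "\<dots> = m * n" using cX cP by simp
    finally show ?thesis .
  qed
  have indW: "ind X \<in> W" if "X \<in> P" for X
    unfolding W_def class_const_def supp_on_def ind_def
    using XD[OF that] disj[OF that] by auto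
  have inj: "inj_on ind P"
  proof (rule inj_onI)
    fix X Y assume XY: "X \<in> P" "Y \<in> P" "ind X = ind Y"
    show "X = Y"
    proof (rule ccontr)
      assume "X \<noteq> Y"
      obtain a where a: "a \<in> X" using Xne[OF XY(1)] by auto
      have "a \<notin> Y" using disj[OF XY(1,2) \<open>X \<noteq> Y\<close>] a by auto
      then have "ind X $ a \<noteq> ind Y $ a" using a by (simp add: ind_def)
      with XY(3) show False by simp
    qed
  qed
  have ind_ind: "independent (ind ` P)"
  proof (rule pairwise_orthogonal_independent)
    show "pairwise orthogonal (ind ` P)"
      unfolding pairwise_def orthogonal_def
    proof (clarify)
      fix X Y assume XY: "X \<in> P" "Y \<in> P" "ind X \<noteq> ind Y"
      then have "X \<noteq> Y" by auto
      then have "X \<inter> Y = {}" using disj XY by auto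
      then show "ind X \<bullet> ind Y = 0"
        unfolding inner_vec_def ind_def by (auto intro!: sum.neutral)
    qed
    show "0 \<notin> ind ` P"
    proof
      assume "0 \<in> ind ` P"
      then obtain X where X: "X \<in> P" "ind X = 0" by auto
      obtain a where a: "a \<in> X" using Xne[OF X(1)] by auto
      have "ind X $ a = 1" using a by (simp add: ind_def)
      with X show False by simp
    qed
  qed
  have dimI: "dim (ind ` P) = m"
    using dim_eq_card_independent[OF ind_ind] card_image[OF inj] cP by simp
  have orth: "x \<bullet> y = 0" if "x \<in> Wp" "y \<in> ind ` P" for x y
    using that indW unfolding Wp_def orth_in_def by auto
  have "dim (Wp \<union> ind ` P) = dim Wp + dim (ind ` P)"
    by (rule dim_orthogonal_sum) (use orth in auto)
  moreover have "dim (Wp \<union> ind ` P) \<le> dim (supp_on D)"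
  proof (rule dim_subset)
    show "Wp \<union> ind ` P \<subseteq> supp_on D"
      using indW unfolding Wp_def orth_in_def W_def class_const_def by auto
  qed
  ultimately have dWp: "dim Wp \<le> m * n - m" using dimI dim_supp_on[of D] cardD by simp
  have "Wp = eigsp E D Wp s"
  proof (rule subspace_dim_equal[symmetric])
    show "subspace (eigsp E D Wp s)" by (rule subspace_eigsp) (simp add: Wp_def subspace_orth_in)
    show "subspace Wp" by (simp add: Wp_def subspace_orth_in)
    show "eigsp E D Wp s \<subseteq> Wp" unfolding eigsp_def by auto
    show "dim Wp \<le> dim (eigsp E D Wp s)"
      using fd dWp unfolding Wp_def W_def by (simp add: diff_mult_distrib2)
  qed
  obtain X where X: "X \<in> P" using Dne part unfolding partition_on_def by auto
  have "card X \<ge> 2"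
  proof -
    have "card X \<noteq> 0" using Xne[OF X] by simp
    then show ?thesis using n2 cX X by fastforce
  qed
  obtain a b where ab: "a \<in> X" "b \<in> X" "a \<noteq> b"
  proof -
    have "\<not> card X \<le> Suc 0" using \<open>card X \<ge> 2\<close> by simp
    then have "\<not> (\<forall>a\<in>X. \<forall>b\<in>X. a = b)" using card_le_Suc0_iff_eq[of X] by simp
    then show ?thesis using that by blast
  qed
  define x where "x = axis a (1::real) - axis b 1"
  have xi: "x $ i = (if i = a then 1 else 0) - (if i = b then 1 else 0)" for i
    by (simp add: x_def axis_def)
  have aD: "a \<in> D" "b \<in> D" using XD[OF X] ab by blast+
  have xs: "x \<in> supp_on D" unfolding supp_on_def
  proof (intro CollectI allI impI)
    fix i assume "i \<notin> D"
    then have "i \<noteq> a" "i \<noteq> b" using aD by blast+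
    then show "x $ i = 0" by (simp add: xi)
  qed
  have xo: "x \<bullet> w = 0" if "w \<in> W" for w
  proof -
    have "w $ a = w $ b" using that X ab unfolding W_def class_const_def by blast
    then show ?thesis unfolding x_def by (simp add: inner_diff_left inner_axis')
  qed
  have "x \<in> Wp" unfolding Wp_def orth_in_def using xs xo by blast
  then have "x \<in> eigsp E D Wp s" using \<open>Wp = eigsp E D Wp s\<close> by simp
  then have eq: "adj_op E D x = s *\<^sub>R x" unfolding eigsp_def by auto
  have "adj_op E D x $ a = (\<Sum>j\<in>D. if E a j then x $ j else 0)"
    using aD by (simp add: adj_op_def)
  also have "\<dots> = (\<Sum>j\<in>D. if j = b then (if E a b then -1 else 0) else 0)"
    by (rule sum.cong) (use ab irr in \<open>auto simp: xi\<close>)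
  also have "\<dots> = (if E a b then -1 else 0)" using aD by simp
  finally have "(if E a b then -1 else 0) = s"
    using eq ab by (simp add: xi)
  then show ?thesis by (auto split: if_splits)
qed

lemma arith_contra: fixes K l2 V :: nat and r s :: real
  assumes s01: "s = 0 \<or> s = -1" and rs: "r > s"
  and rt: "r = sqrt t" "s = - 2 * sqrt t" and t_def: "t = real K ^ 2 - real l2 * real V"
  shows False
proof -
  have "sqrt t \<ge> 0" using rs rt by linarith
  then have "sqrt t > 0" using rs rt by linarith
  then have "s = -1" using s01 rt by auto
  then have st: "sqrt t = 1/2" using rt by simp
  then have "t > 0" using real_sqrt_gt_0_iff by fastforce
  then have "t = (sqrt t)^2" by simp
  then have "t = 1/4" using st by (simp add: power2_eq_square)
  then have "4 * real K ^ 2 = 4 * real l2 * real V + 1" unfolding t_def by (simp add: algebra_simps)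
  then have "real (4 * K ^ 2) = real (4 * l2 * V + 1)" by simp
  then have "4 * K ^ 2 = 4 * l2 * V + 1" by (simp only: of_nat_eq_iff)
  note eq = this
  have "even (4 * K ^ 2)" by simp
  then have "even (4 * l2 * V + 1)" unfolding eq .
  then show False by simp
qed

theorem mainTheorem4:
  fixes E :: "'a::finite \<Rightarrow> 'a \<Rightarrow> bool"
    and v k la mu f g c :: nat and r s :: real
    and C :: "'a set" and P :: "'a set set"
    and V K l1 l2 m n f1 f2 g1 g2 :: nat
  assumes prim: "primitive_srg E v k la mu"
    and spec: "\<And>\<theta>. eig_mult E UNIV \<theta> =
        (if \<theta> = real k then 1 else 0) + (if \<theta> = r then f else 0) + (if \<theta> = s then g else 0)"
    and kr: "real k > r" and rs: "r > s"
    and cocl: "coclique E C" and cardC: "card C = c"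
    and csize: "real c = real v * s / (s - real k)"
    and ddg: "proper_ddg E (UNIV - C) P V K l1 l2 m n"
    and f1_def: "f1 = dim (eigsp E (UNIV - C) (orth_in (UNIV - C) (class_const (UNIV - C) P))
                   (sqrt (real K - real l1)))"
    and f2_def: "f2 = dim (eigsp E (UNIV - C) (orth_in (UNIV - C) (class_const (UNIV - C) P))
                   (- sqrt (real K - real l1)))"
    and g1_def: "g1 = dim (eigsp E (UNIV - C)
                   (class_const (UNIV - C) P \<inter> orth_in (UNIV - C) {ones_on (UNIV - C)})
                   (sqrt (real K ^ 2 - real l2 * real V)))"
    and g2_def: "g2 = dim (eigsp E (UNIV - C)
                   (class_const (UNIV - C) P \<inter> orth_in (UNIV - C) {ones_on (UNIV - C)})
                   (- sqrt (real K ^ 2 - real l2 * real V)))"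
    and known_f: "f1 + f2 = m * (n - 1)"
    and known_g: "g1 + g2 = m - 1"
    and known_specD: "\<And>\<theta>. int (eig_mult E (UNIV - C) \<theta>) =
        (if \<theta> = real k + s then 1 else 0) + (if \<theta> = r then int f - int c + 1 else 0)
        + (if \<theta> = r + s then int c - 1 else 0) + (if \<theta> = s then int g - int c else 0)"
    and known_cg: "c < g"
  shows "\<not> (r = sqrt (real K ^ 2 - real l2 * real V) \<and>
            r + s = - sqrt (real K ^ 2 - real l2 * real V) \<and>
            s = - sqrt (real K - real l1) \<and>
            f1 = 0 \<and> int g1 = int f - int c + 1 \<and> int g2 = int c - 1 \<and> int f2 = int g - int c)"
proof
  assume H: "r = sqrt (real K ^ 2 - real l2 * real V) \<and>
            r + s = - sqrt (real K ^ 2 - real l2 * real V) \<and>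
            s = - sqrt (real K - real l1) \<and>
            f1 = 0 \<and> int g1 = int f - int c + 1 \<and> int g2 = int c - 1 \<and> int f2 = int g - int c"
  define D where "D = UNIV - C"
  have dd: "ddg E D P V K l1 l2 m n" "n \<noteq> 1" using ddg unfolding proper_ddg_def D_def by auto
  have part: "partition_on D P" and cP: "card P = m" and cX: "\<forall>X\<in>P. card X = n"
    and Dne: "D \<noteq> {}" using dd(1) unfolding ddg_def by auto
  have irr: "\<And>x. \<not> E x x" using prim unfolding primitive_srg_def srg_def simple_graph_def by auto
  have "f2 = m * (n - 1)" using known_f H by simp
  then have fd: "dim (eigsp E D (orth_in D (class_const D P)) (- sqrt (real K - real l1))) = m * (n - 1)"
    using f2_def unfolding D_def by simp
  have "- sqrt (real K - real l1) = 0 \<or> - sqrt (real K - real l1) = -1"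
    by (rule main_aux[OF part cP cX dd(2) Dne irr fd])
  then have s01: "s = 0 \<or> s = -1" using H by simp
  show False
    by (rule arith_contra[of s r "real K ^ 2 - real l2 * real V" K l2 V]) (use s01 rs H in auto)
qed

end
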